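(* For every alphabet $\Sigma$, every $n\ge 2$ and every $n$-gram LM $p$ over $\Sigma$, there exists a single-layer hard attention transformer LM with $n-1$ attention heads that is weakly equivalent to $p$.
   Context: Let $\Sigma$ be a finite nonempty alphabet and let $\mathrm{EOS},\mathrm{BOS}\notin\Sigma$ be distinct symbols; put $\overline\Sigma=\Sigma\cup\{\mathrm{EOS}\}$ and $\underline\Sigma=\Sigma\cup\{\mathrm{BOS}\}$. A language model (LM) over $\Sigma$ is a probability distribution $p$ on $\Sigma^*$ given autoregressively by $p(y)=p(\mathrm{EOS}\mid y)\prod_{t=1}^{|y|}p(y_t\mid y_{<t})$, where each $p(\cdot\mid y_{<t})$ is a probability distribution on $\overline\Sigma$. Two LMs $p,q$ over $\Sigma$ are weakly equivalent if $p(y)=q(y)$ for all $y\in\Sigma^*$. For $n\ge2$, an $n$-gram LM is an LM such that, after left-padding every string with $n-1$ copies of $\mathrm{BOS}$, $p(y_t\mid y_{<t})=p(y_t\mid y_{t-n+1}\cdots y_{t-1})$ depends only on the history $y_{t-n+1}\cdots y_{t-1}\in\underline\Sigma^{\,n-1}$ (the last $n-1$ symbols of the padded prefix); the distributions on $\overline\Sigma$ assigned to the histories are arbitrary (probabilities may be $0$). Transformers. A transformer of width $D$ processes a string $w=w_1\cdots w_T$ over $\underline\Sigma$ (for an LM, the prefix $y_{<t}$ left-padded with $n-1$ copies of BOS) as follows. A static encoding gives $x^0_j=r(w_j,j)\in\mathbb R^D$ for a function $r:\underline\Sigma\times\mathbb N\to\mathbb R^D$. An attention head with query, key, value, output functions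 $Q,K,V,O:\mathbb R^D\to\mathbb R^D$, scoring function $f:\mathbb R^D\times\mathbb R^D\to\mathbb R$ and normalization function $\pi$ maps $(x_1,\dots,x_T)$ to $(z_1,\dots,z_T)$ where, for each position $s$, $q_s=Q(x_s)$, $k_j=K(x_j)$, $v_j=V(x_j)$, $\sigma=\pi(f(q_s,k_1),\dots,f(q_s,k_s))$ (a probability vector), $a_s=\sum_{j=1}^s\sigma_jv_j+x_s$, $z_s=O(a_s)+a_s$. A layer with $H$ heads applies $H$ heads to the same input and maps the concatenation of the $H$ outputs at each position back to $\mathbb R^D$ with a head-combining function $\mathcal H:\mathbb R^{HD}\to\mathbb R^D$; an $L$-layer transformer composes $L$ layers after $r$. Given a final function $F:\mathbb R^D\to\mathbb R^D$ and an output matrix $E\in(\mathbb R\cup\{-\infty\})^{|\overline\Sigma|\times D}$ (with $\exp(-\infty)=0$), the transformer LM sets $p(y_t\mid y_{<t})=\mathrm{softmax}(E\,F(x^L))_{y_t}$, where $x^L$ is the last-layer representation at the last position of the padded prefix $y_{<t}$. In this definition $r,Q,K,V,O,f,\mathcal H,F$ are arbitrary functions. Hard attention means $\pi=\mathrm{hardmax}$, where $\mathrm{hardmax}(x)_d=1/m$ if $d\in\arg\max x$ with $m=|\arg\max x|$, and $0$ otherwise. Sparse attention means $\pi=\mathrm{sparsemax}$, $\mathrm{sparsemax}(x)=\arg\min_{p\in\Delta}\|p-x\|_2^2$ over the probability simplex $\Delta$. *)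

theory Defs
  imports "HOL-Analysis.Analysis" "HOL-Library.Extended_Real"
begin

datatype 'a eos_sym = Tok 'a | EOS
datatype 'a bos_sym = BTok 'a | BOS

text \<open>p y e is the conditional probability p(e | y) of the next symbol e (in the alphabet
  extended by EOS) given the prefix y.\<close>
type_synonym 'a cond_lm = "'a list \<Rightarrow> 'a eos_sym \<Rightarrow> real"

definition is_next_distrib :: "('a::finite eos_sym \<Rightarrow> real) \<Rightarrow> bool" where
  "is_next_distrib q \<longleftrightarrow> (\<forall>e. 0 \<le> q e) \<and> q EOS + (\<Sum>a\<in>UNIV. q (Tok a)) = 1"

definition lm_prob :: "'a cond_lm \<Rightarrow> 'a list \<Rightarrow> real" where
  "lm_prob p y = p y EOS * (\<Prod>t<length y. p (take t y) (Tok (y ! t)))"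

definition is_LM :: "('a::finite) cond_lm \<Rightarrow> bool" where
  "is_LM p \<longleftrightarrow> (\<forall>y. is_next_distrib (p y)) \<and> (lm_prob p has_sum 1) UNIV"

definition weakly_equiv :: "'a cond_lm \<Rightarrow> 'a cond_lm \<Rightarrow> bool" where
  "weakly_equiv p q \<longleftrightarrow> (\<forall>y. lm_prob p y = lm_prob q y)"

definition padded :: "nat \<Rightarrow> 'a list \<Rightarrow> 'a bos_sym list" where
  "padded n y = replicate (n - 1) BOS @ map BTok y"

definition history :: "nat \<Rightarrow> 'a list \<Rightarrow> 'a bos_sym list" where
  "history n y = drop (length (padded n y) - (n - 1)) (padded n y)"

definition is_ngram_LM :: "nat \<Rightarrow> ('a::finite) cond_lm \<Rightarrow> bool" where
  "is_ngram_LM n p \<longleftrightarrow> is_LM p \<and> (\<exists>P. \<forall>y. p y = P (history n y))"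

text \<open>Vectors of R^D are represented as functions nat => real vanishing at indices >= D.\<close>
type_synonym vec = "nat \<Rightarrow> real"

definition in_width :: "nat \<Rightarrow> vec \<Rightarrow> bool" where
  "in_width D x \<longleftrightarrow> (\<forall>i\<ge>D. x i = 0)"

record head =
  hQ :: "vec \<Rightarrow> vec"
  hK :: "vec \<Rightarrow> vec"
  hV :: "vec \<Rightarrow> vec"
  hO :: "vec \<Rightarrow> vec"
  hf :: "vec \<Rightarrow> vec \<Rightarrow> real"

text \<open>A layer: its heads and the head-combining function, which receives the H head
  outputs (indexed by h < H) at a position.\<close>
record layer =
  heads :: "head list"
  combine :: "(nat \<Rightarrow> vec) \<Rightarrow> vec"

record 'a transformer =
  width :: nat
  enc :: "'a bos_sym \<Rightarrow> nat \<Rightarrow> vec"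
  layers :: "layer list"
  final :: "vec \<Rightarrow> vec"
  outm :: "'a eos_sym \<Rightarrow> nat \<Rightarrow> ereal"

definition head_ok :: "nat \<Rightarrow> head \<Rightarrow> bool" where
  "head_ok D h \<longleftrightarrow> (\<forall>x. in_width D x \<longrightarrow>
      in_width D (hQ h x) \<and> in_width D (hK h x) \<and> in_width D (hV h x) \<and> in_width D (hO h x))"

definition layer_ok :: "nat \<Rightarrow> layer \<Rightarrow> bool" where
  "layer_ok D l \<longleftrightarrow> (\<forall>h\<in>set (heads l). head_ok D h) \<and>
      (\<forall>Z. (\<forall>i. in_width D (Z i)) \<longrightarrow> in_width D (combine l Z))"

text \<open>All component functions map R^D to R^D; the output matrix has D columns
  (entries at columns >= D are irrelevant, see tf_logit).\<close>
definition wf_transformer :: "'a transformer \<Rightarrow> bool" where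
  "wf_transformer T \<longleftrightarrow>
     (\<forall>s j. in_width (width T) (enc T s j)) \<and>
     (\<forall>l\<in>set (layers T). layer_ok (width T) l) \<and>
     (\<forall>x. in_width (width T) x \<longrightarrow> in_width (width T) (final T x))"

definition hardmax :: "real list \<Rightarrow> real list" where
  "hardmax xs = map (\<lambda>x. if x = Max (set xs)
        then 1 / real (card {d. d < length xs \<and> xs ! d = Max (set xs)}) else 0) xs"

text \<open>One attention head with normalization pi, applied to the sequence xs
  (list index i corresponds to position i+1).\<close>
definition head_apply :: "(real list \<Rightarrow> real list) \<Rightarrow> head \<Rightarrow> vec list \<Rightarrow> vec list" where
  "head_apply \<pi> h xs = map (\<lambda>i.
     let q = hQ h (xs ! i);
         \<sigma> = \<pi> (map (\<lambda>j. hf h q (hK h (xs ! j))) [0..<Suc i]);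
         a = (\<lambda>d. (\<Sum>j\<le>i. \<sigma> ! j * hV h (xs ! j) d) + (xs ! i) d)
     in (\<lambda>d. hO h a d + a d)) [0..<length xs]"

definition layer_apply :: "(real list \<Rightarrow> real list) \<Rightarrow> layer \<Rightarrow> vec list \<Rightarrow> vec list" where
  "layer_apply \<pi> l xs = map (\<lambda>i. combine l (\<lambda>h. if h < length (heads l)
        then head_apply \<pi> (heads l ! h) xs ! i else (\<lambda>_. 0))) [0..<length xs]"

text \<open>Representations after all layers; positions are 1-based in the static encoding.\<close>
definition tf_reps :: "(real list \<Rightarrow> real list) \<Rightarrow> 'a transformer \<Rightarrow> 'a bos_sym list \<Rightarrow> vec list" where
  "tf_reps \<pi> T w = fold (layer_apply \<pi>) (layers T) (map (\<lambda>j. enc T (w ! j) (Suc j)) [0..<length w])"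

text \<open>Logit of symbol e: the e-th entry of E F(x^L) at the last position (extended-real
  arithmetic; Isabelle's convention -inf * 0 = 0).\<close>
definition tf_logit :: "(real list \<Rightarrow> real list) \<Rightarrow> 'a transformer \<Rightarrow> 'a bos_sym list \<Rightarrow> 'a eos_sym \<Rightarrow> ereal" where
  "tf_logit \<pi> T w e = (\<Sum>d<width T. outm T e d * ereal (final T (last (tf_reps \<pi> T w)) d))"

text \<open>exp extended with exp(-inf) = 0 (the value at +inf is never used, see tf_output_ok).\<close>
definition exp_ext :: "ereal \<Rightarrow> real" where
  "exp_ext x = (case x of ereal r \<Rightarrow> exp r | _ \<Rightarrow> 0)"

text \<open>The softmax is well defined: no logit is +inf and not all are -inf.\<close>
definition tf_output_ok :: "nat \<Rightarrow> (real list \<Rightarrow> real list) \<Rightarrow> 'a transformer \<Rightarrow> bool" where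
  "tf_output_ok n \<pi> T \<longleftrightarrow> (\<forall>y. (\<forall>e. tf_logit \<pi> T (padded n y) e < \<infinity>) \<and>
                                 (\<exists>e. - \<infinity> < tf_logit \<pi> T (padded n y) e))"

definition tf_cond :: "nat \<Rightarrow> (real list \<Rightarrow> real list) \<Rightarrow> ('a::finite) transformer \<Rightarrow> 'a cond_lm" where
  "tf_cond n \<pi> T y e = exp_ext (tf_logit \<pi> T (padded n y) e) /
     (exp_ext (tf_logit \<pi> T (padded n y) EOS) + (\<Sum>a\<in>UNIV. exp_ext (tf_logit \<pi> T (padded n y) (Tok a))))"

end

theory Submission
  imports Defs
begin

definition bcode :: "'a::countable bos_sym \<Rightarrow> real" where
  "bcode s = (case s of BOS \<Rightarrow> 0 | BTok a \<Rightarrow> real (Suc (to_nat a)))"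

lemma inj_bcode: "inj bcode"
  unfolding inj_def bcode_def by (auto split: bos_sym.splits)

definition eidx :: "'a::countable eos_sym \<Rightarrow> nat" where
  "eidx e = (case e of EOS \<Rightarrow> 0 | Tok a \<Rightarrow> Suc (to_nat a))"

lemma inj_eidx: "inj eidx"
  unfolding inj_def eidx_def by (auto split: eos_sym.splits)


lemma hardmax_unique:
  assumes k: "k < length ys" and z: "ys ! k = 0" and neg: "\<And>j. j < length ys \<Longrightarrow> j \<noteq> k \<Longrightarrow> ys ! j < 0"
    and j: "j < length ys"
  shows "hardmax ys ! j = (if j = k then 1 else 0)"
proof -
  have M: "Max (set ys) = 0"
  proof (rule Max_eqI)
    show "finite (set ys)" by simp
    show "y \<le> 0" if "y \<in> set ys" for y
      using that neg z by (metis in_set_conv_nth less_imp_le order_refl)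
    show "0 \<in> set ys" using k z by (metis nth_mem)
  qed
  have C: "{d. d < length ys \<and> ys ! d = 0} = {k}"
    using k z neg by (auto, metis less_irrefl)
  show ?thesis
    unfolding hardmax_def using j M C neg[of j] by auto
qed


definition hd_h :: "nat \<Rightarrow> head" where
  "hd_h h = \<lparr>hQ = id, hK = id, hV = (\<lambda>x d. if d = 2 then x 0 else 0), hO = (\<lambda>_ _. 0),
      hf = (\<lambda>q k. - \<bar>q 1 - real h - k 1\<bar>)\<rparr>"

definition encf :: "'a::countable bos_sym \<Rightarrow> nat \<Rightarrow> vec" where
  "encf s j = (\<lambda>d. if d = 0 then bcode s else if d = 1 then real j else 0)"

lemma head_val:
  fixes w :: "'a::countable bos_sym list"
  assumes i: "i < length w" and h: "h \<le> i"
  shows "(head_apply hardmax (hd_h h) (map (\<lambda>j. encf (w ! j) (Suc j)) [0..<length w]) ! i) 2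
         = bcode (w ! (i - h))"
proof -
  define xs where "xs = map (\<lambda>j. encf (w ! j) (Suc j)) [0..<length w]"
  define sc where "sc = map (\<lambda>j. hf (hd_h h) (hQ (hd_h h) (xs ! i)) (hK (hd_h h) (xs ! j))) [0..<Suc i]"
  have xsj: "xs ! j = encf (w ! j) (Suc j)" if "j < length w" for j
    using that unfolding xs_def by simp
  have scj: "sc ! j = - \<bar>real i - real h - real j\<bar>" if "j < Suc i" for j
    proof -
    have "sc ! j = hf (hd_h h) (hQ (hd_h h) (xs ! i)) (hK (hd_h h) (xs ! j))"
      unfolding sc_def using that by (simp del: upt_Suc)
    then show ?thesis using that i by (simp add: xsj hd_h_def encf_def)
  qed
  have len: "length sc = Suc i" unfolding sc_def by simp
  have hm: "hardmax sc ! j = (if j = i - h then 1 else 0)" if "j < Suc i" for j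
  proof (rule hardmax_unique)
    show "i - h < length sc" using len by simp
    show "sc ! (i - h) = 0" using scj[of "i-h"] h by simp
    show "sc ! j < 0" if "j < length sc" "j \<noteq> i - h" for j
      using that scj[of j] len h by auto
    show "j < length sc" using that len by simp
  qed
  have S: "(\<Sum>j\<le>i. hardmax sc ! j * hV (hd_h h) (xs ! j) 2) = hV (hd_h h) (xs ! (i - h)) 2"
  proof -
    have "(\<Sum>j\<le>i. hardmax sc ! j * hV (hd_h h) (xs ! j) 2)
        = (\<Sum>j\<le>i. if j = i - h then hV (hd_h h) (xs ! j) 2 else 0)"
      by (rule sum.cong) (auto simp: hm)
    also have "\<dots> = hV (hd_h h) (xs ! (i - h)) 2" by (simp add: sum.delta)
    finally show ?thesis .
  qed
  have "(head_apply hardmax (hd_h h) xs ! i) 2 =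
     (\<Sum>j\<le>i. hardmax sc ! j * hV (hd_h h) (xs ! j) 2) + (xs ! i) 2"
    unfolding head_apply_def sc_def using i
    by (simp add: xs_def Let_def) (simp add: hd_h_def)
  also have "\<dots> = bcode (w ! (i - h))"
    using S i h by (simp add: xsj hd_h_def encf_def)
  finally show ?thesis unfolding xs_def .
qed


definition feat :: "nat \<Rightarrow> ('a::countable eos_sym \<Rightarrow> real) \<Rightarrow> vec" where
  "feat D q d = (if 3 \<le> d \<and> d < D \<and> (d - 3) div 2 \<in> range (eidx :: 'a eos_sym \<Rightarrow> nat) then
     (let e = inv eidx ((d - 3) div 2) in
        if even (d - 3) then (if 0 < q e then ln (q e) else 0) else (if q e = 0 then 1 else 0))
     else 0)"

definition om :: "'a::countable eos_sym \<Rightarrow> nat \<Rightarrow> ereal" where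
  "om e d = (if d = 3 + 2 * eidx e then ereal 1 else if d = 4 + 2 * eidx e then - \<infinity> else 0)"

lemma logit_val:
  assumes "4 + 2 * eidx e < D" and "0 \<le> q e"
  shows "(\<Sum>d<D. om e d * ereal (feat D q d)) = (if 0 < q e then ereal (ln (q e)) else - \<infinity>)"
proof -
  let ?c1 = "3 + 2 * eidx e" and ?c2 = "4 + 2 * eidx e"
  have sub: "{?c1, ?c2} \<subseteq> {..<D}" using assms by auto
  have "(\<Sum>d<D. om e d * ereal (feat D q d)) = (\<Sum>d\<in>{?c1, ?c2}. om e d * ereal (feat D q d))"
    by (rule sum.mono_neutral_right) (use sub in \<open>auto simp: om_def\<close>)
  also have "\<dots> = om e ?c1 * ereal (feat D q ?c1) + om e ?c2 * ereal (feat D q ?c2)"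
    by simp
  also have "feat D q ?c1 = (if 0 < q e then ln (q e) else 0)"
    using assms by (simp add: feat_def inv_f_f[OF inj_eidx])
  also have "feat D q ?c2 = (if q e = 0 then 1 else 0)"
    using assms
    by (simp add: feat_def inv_f_f[OF inj_eidx])
  finally show ?thesis using assms(2) by (auto simp: om_def)
qed


lemma history_nth:
  assumes "n \<ge> 2" "k < n - 1"
  shows "history n y ! k = padded n y ! (length (padded n y) - 1 - (n - 2 - k))"
    and "length (history n y) = n - 1"
proof -
  have L: "length (padded n y) = n - 1 + length y" by (simp add: padded_def)
  show "length (history n y) = n - 1" by (simp add: history_def L)
  show "history n y ! k = padded n y ! (length (padded n y) - 1 - (n - 2 - k))"
    unfolding history_def using assms L by (simp add: nth_drop) (rule arg_cong[where f="(!) _"], linarith)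
qed

theorem theorem3p1:
  fixes p :: "('a::finite) cond_lm" and n :: nat
  assumes "n \<ge> 2" and "is_ngram_LM n p"
  shows "\<exists>T :: 'a transformer.
           wf_transformer T \<and> length (layers T) = 1 \<and> length (heads (hd (layers T))) = n - 1 \<and>
           tf_output_ok n hardmax T \<and> weakly_equiv p (tf_cond n hardmax T)"
proof -
  from assms(2) obtain P where Peq: "\<And>y. p y = P (history n y)" and LM: "is_LM p"
    unfolding is_ngram_LM_def by blast
  have distr: "is_next_distrib (p y)" for y using LM unfolding is_LM_def by blast
  define M where "M = Suc (Max (range (to_nat :: 'a \<Rightarrow> nat)))"
  define D where "D = 2 * M + 5"
  have eb: "4 + 2 * eidx e < D" for e :: "'a eos_sym"
  proof -
    have "eidx e \<le> M"
      by (cases e) (auto simp: eidx_def M_def)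
    then show ?thesis unfolding D_def by simp
  qed
  define cmb where "cmb = (\<lambda>Z :: nat \<Rightarrow> vec. feat D (P (map (\<lambda>k. inv bcode (Z (n - 2 - k) 2) :: 'a bos_sym) [0..<n - 1])))"
  define l where "l = \<lparr>heads = map hd_h [0..<n - 1], combine = cmb\<rparr>"
  define T where "T = \<lparr>width = D, enc = (encf :: 'a bos_sym \<Rightarrow> nat \<Rightarrow> vec), layers = [l], final = id, outm = om\<rparr>"
  have featw: "in_width D (feat D q)" for q :: "'a eos_sym \<Rightarrow> real"
    unfolding in_width_def feat_def by auto
  have wf: "wf_transformer T"
    unfolding wf_transformer_def T_def
  proof (intro conjI allI impI ballI; simp)
    show "in_width D (encf s j)" for s :: "'a bos_sym" and j
      unfolding in_width_def encf_def D_def by auto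
    show "layer_ok D l"
      unfolding layer_ok_def l_def cmb_def
      using featw by (auto simp: head_ok_def hd_h_def in_width_def D_def)
  qed
  have key: "last (tf_reps hardmax T (padded n y)) = feat D (P (history n y))" for y
  proof -
    define w where "w = padded n y"
    define L where "L = length w"
    have L: "L = n - 1 + length y" unfolding L_def w_def by (simp add: padded_def)
    have Lpos: "L > 0" using L assms(1) by simp
    define xs where "xs = map (\<lambda>j. encf (w ! j) (Suc j)) [0..<L]"
    have "tf_reps hardmax T w = layer_apply hardmax l xs"
      unfolding tf_reps_def T_def xs_def L_def by simp
    then have "last (tf_reps hardmax T w) = layer_apply hardmax l xs ! (L - 1)"
      using Lpos by (simp add: last_conv_nth layer_apply_def xs_def)
    also have "\<dots> = cmb (\<lambda>h. if h < n - 1 then head_apply hardmax (hd_h h) xs ! (L - 1) else (\<lambda>_. 0))"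
    proof -
      have lx: "length xs = L" by (simp add: xs_def)
      have hl: "heads l = map hd_h [0..<n - 1]" "combine l = cmb" by (simp_all add: l_def)
      show ?thesis using Lpos unfolding layer_apply_def lx hl
        by (simp del: upt_Suc) (rule arg_cong[where f=cmb], rule ext, simp)
    qed
    also have "\<dots> = feat D (P (history n y))"
    proof -
      have "map (\<lambda>k. inv bcode ((if n - 2 - k < n - 1 then head_apply hardmax (hd_h (n - 2 - k)) xs ! (L - 1) else (\<lambda>_. 0)) 2) :: 'a bos_sym) [0..<n - 1]
          = history n y"
      proof (rule nth_equalityI)
        show "length (map (\<lambda>k. inv bcode ((if n - 2 - k < n - 1 then head_apply hardmax (hd_h (n - 2 - k)) xs ! (L - 1) else (\<lambda>_. 0)) 2) :: 'a bos_sym) [0..<n - 1]) = length (history n y)"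
          by (simp add: history_def padded_def)
        fix k assume "k < length (map (\<lambda>k. inv bcode ((if n - 2 - k < n - 1 then head_apply hardmax (hd_h (n - 2 - k)) xs ! (L - 1) else (\<lambda>_. 0)) 2) :: 'a bos_sym) [0..<n - 1])"
        then have k: "k < n - 1" by simp
        have hk: "n - 2 - k < n - 1" using k assms(1) by linarith
        have hv: "(head_apply hardmax (hd_h (n - 2 - k)) xs ! (L - 1)) 2 = bcode (w ! (L - 1 - (n - 2 - k)))"
          unfolding xs_def L_def by (rule head_val) (use Lpos L k assms(1) in \<open>auto simp: L_def\<close>)
        show "map (\<lambda>k. inv bcode ((if n - 2 - k < n - 1 then head_apply hardmax (hd_h (n - 2 - k)) xs ! (L - 1) else (\<lambda>_. 0)) 2) :: 'a bos_sym) [0..<n - 1] ! k = history n y ! k"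
          using k hk hv history_nth(1)[OF assms(1) k, of y]
          by (simp add: inv_f_f[OF inj_bcode] w_def L_def)
      qed
      then show ?thesis unfolding cmb_def by simp
    qed
    finally show ?thesis unfolding w_def .
  qed
  have logit: "tf_logit hardmax T (padded n y) e = (if 0 < p y e then ereal (ln (p y e)) else - \<infinity>)" for y e
  proof -
    have nn: "0 \<le> P (history n y) e" using distr[of y] Peq[of y] unfolding is_next_distrib_def by auto
    have "tf_logit hardmax T (padded n y) e = (\<Sum>d<D. om e d * ereal (feat D (P (history n y)) d))"
      unfolding tf_logit_def using key[of y] by (simp add: T_def)
    also have "\<dots> = (if 0 < P (history n y) e then ereal (ln (P (history n y) e)) else - \<infinity>)"
      by (rule logit_val[where q="P (history n y)", OF eb nn])
    finally show ?thesis by (simp add: Peq)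
  qed
  have expl: "exp_ext (tf_logit hardmax T (padded n y) e) = p y e" for y e
    using distr[of y] unfolding is_next_distrib_def
    by (auto simp: logit exp_ext_def) (metis order_le_less)
  have cond: "tf_cond n hardmax T y e = p y e" for y e
    using distr[of y] unfolding tf_cond_def is_next_distrib_def by (simp add: expl)
  have ok: "tf_output_ok n hardmax T"
    unfolding tf_output_ok_def
  proof (intro allI conjI)
    fix y
    show "tf_logit hardmax T (padded n y) e < \<infinity>" for e by (simp add: logit)
    show "\<exists>e. - \<infinity> < tf_logit hardmax T (padded n y) e"
    proof (rule ccontr)
      assume "\<not> ?thesis"
      then have "\<forall>e. \<not> 0 < p y e" by (auto simp: logit split: if_splits)
      then have "\<forall>e. p y e = 0" using distr[of y] unfolding is_next_distrib_def by (metis order_le_less)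
      then show False using distr[of y] unfolding is_next_distrib_def by simp
    qed
  qed
  have we: "weakly_equiv p (tf_cond n hardmax T)"
    unfolding weakly_equiv_def lm_prob_def by (simp add: cond)
  show ?thesis
    by (rule exI[of _ T]) (use wf ok we in \<open>simp add: T_def l_def\<close>)
qed

end
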